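(* Let $(t_i)_{i\in\mathbb{N}}$ be a sequence of real numbers that are algebraically independent over $\mathbb{Q}$, and let $A=\{P_{i,j} : i,j\in\mathbb{N},\ i<j\}\subseteq\mathbb{R}^2$, where $P_{i,j} = (t_i + t_j,\ t_i^2 + t_it_j + t_j^2)$. Then for no positive integer $m$ can $A$ be partitioned as $A=A_1\cup\cdots\cup A_m$ with each $A_r$ containing no three collinear points. *)

theory Defs
  imports "HOL-Analysis.Analysis"
begin

text \<open>A monomial in countably many variables is an exponent vector with finite support;
  its value at the point t is the product of the powers t i ^ alpha i.\<close>
definition monomial_val :: "(nat \<Rightarrow> real) \<Rightarrow> (nat \<Rightarrow> nat) \<Rightarrow> real" where
  "monomial_val t \<alpha> = (\<Prod>i\<in>{i. \<alpha> i \<noteq> 0}. t i ^ \<alpha> i)"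

text \<open>Algebraic independence over Q: no nonzero polynomial with rational coefficients
  (a finite rational linear combination of distinct monomials) vanishes at t.\<close>
definition alg_indep_over_rat :: "(nat \<Rightarrow> real) \<Rightarrow> bool" where
  "alg_indep_over_rat t \<longleftrightarrow>
     (\<forall>M c. finite M \<and> (\<forall>\<alpha>\<in>M. finite {i. \<alpha> i \<noteq> 0}) \<and>
        (\<Sum>\<alpha>\<in>M. of_rat (c \<alpha>) * monomial_val t \<alpha>) = 0
        \<longrightarrow> (\<forall>\<alpha>\<in>M. c \<alpha> = 0))"

definition no_three_collinear :: "(real \<times> real) set \<Rightarrow> bool" where
  "no_three_collinear S \<longleftrightarrow>
     (\<forall>p\<in>S. \<forall>q\<in>S. \<forall>r\<in>S. p \<noteq> q \<and> p \<noteq> r \<and> q \<noteq> r \<longrightarrow> \<not> collinear {p, q, r})"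

definition Ppt :: "(nat \<Rightarrow> real) \<Rightarrow> nat \<Rightarrow> nat \<Rightarrow> real \<times> real" where
  "Ppt t i j = (t i + t j, (t i)^2 + t i * t j + (t j)^2)"

end

theory Submission
  imports Defs
begin

lemma tri_ramsey:
  fixes col :: "nat \<Rightarrow> nat \<Rightarrow> nat"
  assumes cm: "\<And>i j. i < j \<Longrightarrow> col i j < m"
  shows "\<exists>a b c. a < b \<and> b < c \<and> col a b = col a c \<and> col a c = col b c"
proof -
  define mn where "mn = (\<lambda>S::nat set. LEAST y. y \<in> S)"
  define clr where "clr = (\<lambda>S. SOME r. r < m \<and> infinite {y \<in> S - {mn S}. col (mn S) y = r})"
  define nxt where "nxt = (\<lambda>S. {y \<in> S - {mn S}. col (mn S) y = clr S})"
  define seq where "seq = rec_nat (UNIV::nat set) (\<lambda>_ S. nxt S)"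
  have seq0: "seq 0 = UNIV" and seqS: "\<And>n. seq (Suc n) = nxt (seq n)" by (simp_all add: seq_def)
  have step: "mn S \<in> S \<and> clr S < m \<and> infinite (nxt S) \<and> nxt S \<subseteq> S
      \<and> (\<forall>y\<in>nxt S. mn S < y \<and> col (mn S) y = clr S)" if inf: "infinite S" for S
  proof -
    have ne: "S \<noteq> {}" using inf by auto
    then have mS: "mn S \<in> S" unfolding mn_def by (metis LeastI ex_in_conv)
    have ml: "mn S \<le> y" if "y \<in> S" for y unfolding mn_def using that by (rule Least_le)
    let ?T = "S - {mn S}"
    have Tinf: "infinite ?T" using inf by simp
    have "?T \<subseteq> (\<Union>r<m. {y \<in> ?T. col (mn S) y = r})"
    proof
      fix y assume y: "y \<in> ?T"
      then have "mn S < y" using ml by force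
      then have "col (mn S) y < m" by (rule cm)
      then show "y \<in> (\<Union>r<m. {y \<in> ?T. col (mn S) y = r})" using y by blast
    qed
    then have "infinite (\<Union>r<m. {y \<in> ?T. col (mn S) y = r})" using Tinf finite_subset by blast
    then have "\<exists>r. r < m \<and> infinite {y \<in> ?T. col (mn S) y = r}" by auto
    then have c: "clr S < m \<and> infinite {y \<in> ?T. col (mn S) y = clr S}"
      unfolding clr_def by (rule someI_ex)
    have "\<forall>y\<in>nxt S. mn S < y \<and> col (mn S) y = clr S"
      unfolding nxt_def using ml by force
    then show ?thesis using c mS unfolding nxt_def by auto
  qed
  have inf: "infinite (seq n)" for n
    by (induction n) (simp_all add: seq0 seqS step)
  define x where "x = (\<lambda>n. mn (seq n))"
  define c where "c = (\<lambda>n. clr (seq n))"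
  have xin: "x n \<in> seq n" for n using step[OF inf] x_def by blast
  have cm': "c n < m" for n using step[OF inf] c_def by blast
  have sub: "seq l \<subseteq> seq (Suc k)" if "k < l" for k l
    using that
  proof (induction l)
    case 0 then show ?case by simp
  next
    case (Suc l)
    have "seq (Suc l) \<subseteq> seq l" using step[OF inf] seqS by auto
    with Suc show ?case by (cases "k = l") auto
  qed
  have key: "x k < x l \<and> col (x k) (x l) = c k" if "k < l" for k l
  proof -
    have "x l \<in> nxt (seq k)" using xin sub[OF that] seqS by auto
    then show ?thesis using step[OF inf[of k]] x_def c_def by blast
  qed
  have "\<not> inj_on c {..m}"
  proof
    assume "inj_on c {..m}"
    moreover have "c ` {..m} \<subseteq> {..<m}" using cm' by auto
    ultimately have "card {..m} \<le> card {..<m}" by (meson card_inj_on_le finite_lessThan)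
    then show False by simp
  qed
  then obtain k l where kl: "k \<noteq> l" "c k = c l" unfolding inj_on_def by blast
  then have "\<exists>k l. k < l \<and> c k = c l" by (metis linorder_neqE_nat)
  then obtain k l where kl: "k < l" "c k = c l" by blast
  have 1: "x k < x l" "col (x k) (x l) = c k" using key[OF kl(1)] by auto
  have 2: "x l < x (Suc l)" "col (x l) (x (Suc l)) = c l" using key[of l "Suc l"] by auto
  have 3: "col (x k) (x (Suc l)) = c k" using key[of k "Suc l"] kl by auto
  show ?thesis using 1 2 3 kl by metis
qed

lemma Ppt_collinear:
  "collinear {Ppt t a b, Ppt t a c, Ppt t b c}"
proof -
  let ?u = "(0::real, - (t a * t b + t b * t c + t c * t a))"
  let ?v = "(1::real, t a + t b + t c)"
  have k1: "Ppt t a b = ?u + (t a + t b) *\<^sub>R ?v"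
    by (simp add: Ppt_def prod_eq_iff algebra_simps power2_eq_square)
  have k2: "Ppt t a c = ?u + (t a + t c) *\<^sub>R ?v"
    by (simp add: Ppt_def prod_eq_iff algebra_simps power2_eq_square)
  have k3: "Ppt t b c = ?u + (t b + t c) *\<^sub>R ?v"
    by (simp add: Ppt_def prod_eq_iff algebra_simps power2_eq_square)
  show ?thesis unfolding collinear_alt
    apply (rule exI[of _ ?u], rule exI[of _ ?v])
    using k1 k2 k3 by blast
qed

lemma alg_indep_inj:
  assumes "alg_indep_over_rat t" "i \<noteq> j"
  shows "t i \<noteq> t j"
proof
  assume eq: "t i = t j"
  define ai where "ai = (\<lambda>k::nat. if k = i then 1::nat else 0)"
  define aj where "aj = (\<lambda>k::nat. if k = j then 1::nat else 0)"
  have ne: "ai \<noteq> aj"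
  proof
    assume "ai = aj"
    then have "ai i = aj i" by simp
    then show False using assms(2) by (simp add: ai_def aj_def)
  qed
  have si: "{k. ai k \<noteq> 0} = {i}" by (auto simp: ai_def)
  have sj: "{k. aj k \<noteq> 0} = {j}" by (auto simp: aj_def)
  have mi: "monomial_val t ai = t i" unfolding monomial_val_def si by (simp add: ai_def)
  have mj: "monomial_val t aj = t j" unfolding monomial_val_def sj by (simp add: aj_def)
  define c where "c = (\<lambda>\<alpha>. if \<alpha> = ai then (1::rat) else -1)"
  have "(\<Sum>\<alpha>\<in>{ai,aj}. of_rat (c \<alpha>) * monomial_val t \<alpha>) = 0"
    using ne ne[symmetric] eq by (simp add: c_def mi mj)
  moreover have "\<forall>\<alpha>\<in>{ai,aj}. finite {i. \<alpha> i \<noteq> 0}" using si sj by auto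
  ultimately have "\<forall>\<alpha>\<in>{ai,aj}. c \<alpha> = 0"
    using assms(1)[unfolded alg_indep_over_rat_def, rule_format, of "{ai,aj}" c] by simp
  thus False by (simp add: c_def)
qed

theorem mainTheorem4:
  fixes t :: "nat \<Rightarrow> real"
  assumes "alg_indep_over_rat t"
  shows "\<not> (\<exists>m::nat. m > 0 \<and> (\<exists>B :: nat \<Rightarrow> (real \<times> real) set.
            (\<Union>r<m. B r) = {Ppt t i j | i j. i < j} \<and> (\<forall>r<m. no_three_collinear (B r))))"
proof
  assume "\<exists>m::nat. m > 0 \<and> (\<exists>B :: nat \<Rightarrow> (real \<times> real) set.
            (\<Union>r<m. B r) = {Ppt t i j | i j. i < j} \<and> (\<forall>r<m. no_three_collinear (B r)))"
  then obtain m :: nat and B :: "nat \<Rightarrow> (real \<times> real) set" where U: "(\<Union>r<m. B r) = {Ppt t i j | i j. i < j}"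
    and N: "\<forall>r<m. no_three_collinear (B r)" by blast
  have ex: "\<exists>r<m. Ppt t i j \<in> B r" if "i < j" for i j
  proof -
    have "Ppt t i j \<in> (\<Union>r<m. B r)" using U that by blast
    thus ?thesis by blast
  qed
  define col where "col = (\<lambda>i j. SOME r. r < m \<and> Ppt t i j \<in> B r)"
  have colp: "col i j < m \<and> Ppt t i j \<in> B (col i j)" if "i < j" for i j
    unfolding col_def using ex[OF that] by (rule someI_ex)
  obtain a b c where abc: "a < b" "b < c" "col a b = col a c" "col a c = col b c"
    using tri_ramsey[of col m] colp by blast
  define s where "s = col a b"
  have s: "s < m" using colp abc s_def by blast
  have inB: "Ppt t a b \<in> B s" "Ppt t a c \<in> B s" "Ppt t b c \<in> B s"
    using colp[OF abc(1)] colp[OF abc(2)] colp[of a c] abc unfolding s_def by auto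
  have p1: "Ppt t a b \<in> B s" and p2: "Ppt t a c \<in> B s" and p3: "Ppt t b c \<in> B s" using inB by auto
  have b: "a < b" and c: "b < c" using abc by auto
  have tab: "t a \<noteq> t b" "t a \<noteq> t c" "t b \<noteq> t c"
    using alg_indep_inj[OF assms] b c by auto
  have d: "Ppt t a b \<noteq> Ppt t a c" "Ppt t a b \<noteq> Ppt t b c" "Ppt t a c \<noteq> Ppt t b c"
    using tab by (auto simp: Ppt_def)
  from N s have "no_three_collinear (B s)" by blast
  then have "\<not> collinear {Ppt t a b, Ppt t a c, Ppt t b c}"
    unfolding no_three_collinear_def using p1 p2 p3 d by blast
  thus False using Ppt_collinear by blast
qed

end
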